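(* For every $x \in \mathbb{R}^z$ and $\ell \in \mathbb{N}$ there exists a time series $x' \in \mathrm{set}(x)^{z'}$ with $z' \in O\big(2^{|\mathrm{set}(x)|^{(2\ell + 2)}}\big)$ such that $D_{(x,\ell)} = D_{(x',\ell)}$.
   Context: For $x=(x_1,\dots,x_z)\in\mathbb{R}^z$, $\mathrm{set}(x)=\{x_i:1\le i\le z\}$. A traversal between sequences of lengths $z$ and $\ell$ is a sequence of index pairs from $(1,1)$ to $(z,\ell)$ where each step increases each index by $0$ or $1$ and at least one index by $1$; $\mathcal{T}_{z,\ell}$ is the set of traversals. For $T\in\mathcal{T}_{z,\ell}$, the traversal sectors are $S_j^{(x,T)}=\{x_i:(i,j)\in T\}$ for $j\in[\ell]$, and the $\ell$-profile of $(x,T)$ is $\big((\min S_j^{(x,T)},\max S_j^{(x,T)})\big)_{j=1}^{\ell}$. $D_{(x,\ell)}$ is the set of all $\ell$-profiles of $(x,T)$ over $T\in\mathcal{T}_{z,\ell}$ (for $x'\in\mathbb{R}^{z'}$, over $T\in\mathcal{T}_{z',\ell}$). *)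

theory Defs
  imports Complex_Main
begin

(* Sequences x = (x_1,...,x_z) are lists of length z; list positions are 0-based,
   so index pair (i,j) in the paper corresponds to (i-1,j-1) here. *)

definition trav_step :: "nat \<times> nat \<Rightarrow> nat \<times> nat \<Rightarrow> bool" where
  "trav_step p q \<longleftrightarrow>
     (fst q = fst p \<or> fst q = Suc (fst p)) \<and>
     (snd q = snd p \<or> snd q = Suc (snd p)) \<and> q \<noteq> p"

definition traversal :: "nat \<Rightarrow> nat \<Rightarrow> (nat \<times> nat) list \<Rightarrow> bool" where
  "traversal z l T \<longleftrightarrow> T \<noteq> [] \<and> hd T = (0, 0) \<and> last T = (z - 1, l - 1) \<and>
     (\<forall>k. Suc k < length T \<longrightarrow> trav_step (T ! k) (T ! Suc k))"

definition sector :: "real list \<Rightarrow> (nat \<times> nat) list \<Rightarrow> nat \<Rightarrow> real set" where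
  "sector x T j = {x ! i | i. (i, j) \<in> set T}"

definition profile :: "real list \<Rightarrow> nat \<Rightarrow> (nat \<times> nat) list \<Rightarrow> (real \<times> real) list" where
  "profile x l T = map (\<lambda>j. (Min (sector x T j), Max (sector x T j))) [0..<l]"

definition profiles :: "real list \<Rightarrow> nat \<Rightarrow> (real \<times> real) list set" where
  "profiles x l = {profile x l T | T. traversal (length x) l T}"

end

theory Submission
  imports Defs
begin

definition upd_last :: "(real \<times> real) list \<Rightarrow> real \<Rightarrow> (real \<times> real) list" where
  "upd_last ps c = butlast ps @ [(min (fst (last ps)) c, max (snd (last ps)) c)]"

inductive R :: "real list \<Rightarrow> (real \<times> real) list \<Rightarrow> bool" where
  base: "R [a] [(a,a)]"
| vert: "R xs ps \<Longrightarrow> R xs (ps @ [(last xs, last xs)])"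
| horiz: "R xs ps \<Longrightarrow> R (xs @ [c]) (upd_last ps c)"
| diag: "R xs ps \<Longrightarrow> R (xs @ [c]) (ps @ [(c,c)])"

lemma length_upd_last[simp]: "ps \<noteq> [] \<Longrightarrow> length (upd_last ps c) = length ps"
  by (simp add: upd_last_def)

lemma R_basic: "R xs ps \<Longrightarrow> xs \<noteq> [] \<and> ps \<noteq> [] \<and> set ps \<subseteq> set xs \<times> set xs \<and>
   fst (last ps) \<le> last xs \<and> last xs \<le> snd (last ps)"
proof (induction rule: R.induct)
  case (base a) then show ?case by simp
next
  case (vert xs ps) then show ?case by auto
next
  case (horiz xs ps c)
  have l: "last ps \<in> set ps" using horiz by simp
  have "set (upd_last ps c) \<subseteq> set (xs @ [c]) \<times> set (xs @ [c])"
  proof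
    fix p assume "p \<in> set (upd_last ps c)"
    then have "p \<in> set (butlast ps) \<or> p = (min (fst (last ps)) c, max (snd (last ps)) c)"
      by (auto simp: upd_last_def)
    then show "p \<in> set (xs @ [c]) \<times> set (xs @ [c])"
    proof
      assume "p \<in> set (butlast ps)" then have "p \<in> set ps" by (rule in_set_butlastD)
      then show ?thesis using horiz by auto
    next
      assume p: "p = (min (fst (last ps)) c, max (snd (last ps)) c)"
      have "last ps \<in> set xs \<times> set xs" using horiz l by blast
      then have "fst (last ps) \<in> set xs" "snd (last ps) \<in> set xs" by (auto simp: mem_Times_iff)
      then show ?thesis unfolding p by (auto simp: min_def max_def)
    qed
  qed
  then show ?case using horiz by (auto simp: upd_last_def)
next
  case (diag xs ps c) then show ?case by auto
qed

lemma rep_snoc: "replicate k a @ [a] = replicate (Suc k) a"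
  by (simp add: replicate_append_same)

lemma R_vert_rep: "R xs ps \<Longrightarrow> R xs (ps @ replicate k (last xs, last xs))"
proof (induction k)
  case 0 then show ?case by simp
next
  case (Suc k)
  have "ps @ replicate (Suc k) (last xs, last xs) = (ps @ replicate k (last xs, last xs)) @ [(last xs, last xs)]"
    by (simp add: replicate_append_same)
  then show ?case using Suc R.vert by metis
qed

lemma R_snoc_inv: "R ys ps \<Longrightarrow> ys = xs @ [c] \<Longrightarrow> xs \<noteq> [] \<Longrightarrow>
  \<exists>ps0 k. R xs ps0 \<and> (ps = upd_last ps0 c @ replicate k (c,c) \<or> ps = ps0 @ replicate (Suc k) (c,c))"
proof (induction arbitrary: xs c rule: R.induct)
  case (base a) then show ?case by (cases xs) auto
next
  case (vert ys ps)
  then obtain ps0 k where h: "R xs ps0" "ps = upd_last ps0 c @ replicate k (c,c) \<or> ps = ps0 @ replicate (Suc k) (c,c)"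
    by blast
  have lc: "last ys = c" using vert by simp
  show ?case
  proof (rule exI[of _ ps0], rule exI[of _ "Suc k"])
    show "R xs ps0 \<and> (ps @ [(last ys, last ys)] = upd_last ps0 c @ replicate (Suc k) (c, c) \<or>
      ps @ [(last ys, last ys)] = ps0 @ replicate (Suc (Suc k)) (c, c))"
      using h lc by (auto simp del: replicate_Suc simp add: rep_snoc)
  qed
next
  case (horiz ys ps c')
  then show ?case by (metis append1_eq_conv append_Nil2 replicate_0)
next
  case (diag ys ps c')
  then show ?case by (metis append1_eq_conv replicate_0 replicate_Suc)
qed

lemma R_snoc_iff: "xs \<noteq> [] \<Longrightarrow> R (xs @ [c]) ps \<longleftrightarrow>
  (\<exists>ps0 k. R xs ps0 \<and> (ps = upd_last ps0 c @ replicate k (c,c) \<or> ps = ps0 @ replicate (Suc k) (c,c)))"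
proof
  assume "R (xs @ [c]) ps" "xs \<noteq> []" then show "\<exists>ps0 k. R xs ps0 \<and> (ps = upd_last ps0 c @ replicate k (c,c) \<or> ps = ps0 @ replicate (Suc k) (c,c))"
    using R_snoc_inv by blast
next
  assume "\<exists>ps0 k. R xs ps0 \<and> (ps = upd_last ps0 c @ replicate k (c,c) \<or> ps = ps0 @ replicate (Suc k) (c,c))"
  then obtain ps0 k where h: "R xs ps0" "ps = upd_last ps0 c @ replicate k (c,c) \<or> ps = ps0 @ replicate (Suc k) (c,c)" by blast
  have l: "last (xs @ [c]) = c" by simp
  from h(2) show "R (xs @ [c]) ps"
  proof
    assume "ps = upd_last ps0 c @ replicate k (c,c)"
    then show ?thesis using R_vert_rep[OF R.horiz[OF h(1)], of c k] l by simp
  next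
    assume "ps = ps0 @ replicate (Suc k) (c,c)"
    then have "ps = (ps0 @ [(c,c)]) @ replicate k (c,c)" by simp
    then show ?thesis using R_vert_rep[OF R.diag[OF h(1)], of c k] l by simp
  qed
qed

lemma upd_last_id: "ps \<noteq> [] \<Longrightarrow> fst (last ps) \<le> c \<Longrightarrow> c \<le> snd (last ps) \<Longrightarrow> upd_last ps c = ps"
proof -
  assume a: "ps \<noteq> []" "fst (last ps) \<le> c" "c \<le> snd (last ps)"
  then have "(min (fst (last ps)) c, max (snd (last ps)) c) = last ps" by (simp add: min_def max_def)
  then show ?thesis using a(1) by (simp add: upd_last_def)
qed

lemma R_dup: "xs \<noteq> [] \<Longrightarrow> R (xs @ [last xs]) ps \<longleftrightarrow> R xs ps"
proof
  assume ne: "xs \<noteq> []" and "R (xs @ [last xs]) ps"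
  then obtain ps0 k where h: "R xs ps0" "ps = upd_last ps0 (last xs) @ replicate k (last xs, last xs) \<or> ps = ps0 @ replicate (Suc k) (last xs, last xs)"
    using R_snoc_iff by blast
  have u: "upd_last ps0 (last xs) = ps0" using R_basic[OF h(1)] upd_last_id by blast
  show "R xs ps" using h u R_vert_rep[OF h(1)] by metis
next
  assume ne: "xs \<noteq> []" and "R xs ps"
  then have "R (xs @ [last xs]) (upd_last ps (last xs))" by (simp add: R.horiz)
  moreover have "upd_last ps (last xs) = ps" using R_basic[OF \<open>R xs ps\<close>] upd_last_id by blast
  ultimately show "R (xs @ [last xs]) ps" by simp
qed

definition ptyp :: "nat \<Rightarrow> real list \<Rightarrow> (real \<times> real) list set" where
  "ptyp l xs = {ps. R xs ps \<and> length ps \<le> l}"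

definition G :: "nat \<Rightarrow> (real \<times> real) list set \<Rightarrow> real \<Rightarrow> (real \<times> real) list set" where
  "G l A c = {ps. length ps \<le> l \<and> (\<exists>ps0\<in>A. \<exists>k. ps = upd_last ps0 c @ replicate k (c,c) \<or> ps = ps0 @ replicate (Suc k) (c,c))}"

lemma ptyp_snoc: "xs \<noteq> [] \<Longrightarrow> ptyp l (xs @ [c]) = G l (ptyp l xs) c"
proof -
  assume ne: "xs \<noteq> []"
  have len: "length ps0 \<le> length ps"
    if "R xs ps0" "ps = upd_last ps0 c @ replicate k (c,c) \<or> ps = ps0 @ replicate (Suc k) (c,c)" for ps ps0 k
    using that R_basic[OF that(1)] by auto
  show ?thesis
  proof (intro set_eqI iffI)
    fix ps assume "ps \<in> ptyp l (xs @ [c])"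
    then have a: "R (xs @ [c]) ps" "length ps \<le> l" unfolding ptyp_def by auto
    then obtain ps0 k where h: "R xs ps0" "ps = upd_last ps0 c @ replicate k (c,c) \<or> ps = ps0 @ replicate (Suc k) (c,c)"
      using R_snoc_iff[OF ne] by blast
    have "length ps0 \<le> l" using len[OF h] a(2) by linarith
    then have "ps0 \<in> ptyp l xs" using h(1) unfolding ptyp_def by auto
    then show "ps \<in> G l (ptyp l xs) c" unfolding G_def using a(2) h(2) by blast
  next
    fix ps assume "ps \<in> G l (ptyp l xs) c"
    then obtain ps0 k where h: "ps0 \<in> ptyp l xs" "ps = upd_last ps0 c @ replicate k (c,c) \<or> ps = ps0 @ replicate (Suc k) (c,c)"
      and a: "length ps \<le> l" unfolding G_def by blast
    have "R xs ps0" using h(1) unfolding ptyp_def by auto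
    then have "R (xs @ [c]) ps" using R_snoc_iff[OF ne] h(2) by blast
    then show "ps \<in> ptyp l (xs @ [c])" using a unfolding ptyp_def by auto
  qed
qed

lemma ptyp_cong: "xs \<noteq> [] \<Longrightarrow> ys \<noteq> [] \<Longrightarrow> ptyp l xs = ptyp l ys \<Longrightarrow> ptyp l (xs @ zs) = ptyp l (ys @ zs)"
proof (induction zs rule: rev_induct)
  case Nil then show ?case by simp
next
  case (snoc c zs)
  then show ?case using ptyp_snoc[of "xs @ zs" l c] ptyp_snoc[of "ys @ zs" l c] by simp
qed


definition ptrav :: "(nat \<times> nat) list \<Rightarrow> bool" where
  "ptrav T \<longleftrightarrow> T \<noteq> [] \<and> hd T = (0, 0) \<and> (\<forall>k. Suc k < length T \<longrightarrow> trav_step (T ! k) (T ! Suc k))"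

lemma ptrav_single: "ptrav [q] \<longleftrightarrow> q = (0,0)"
  by (simp add: ptrav_def)

lemma ptrav_snoc: "T \<noteq> [] \<Longrightarrow> ptrav (T @ [q]) \<longleftrightarrow> ptrav T \<and> trav_step (last T) q"
proof -
  assume ne: "T \<noteq> []"
  have lst: "last T = T ! (length T - 1)" using ne by (simp add: last_conv_nth)
  show ?thesis
  proof
    assume a: "ptrav (T @ [q])"
    have "\<forall>k. Suc k < length T \<longrightarrow> trav_step (T ! k) (T ! Suc k)"
    proof (intro allI impI)
      fix k assume k: "Suc k < length T"
      then show "trav_step (T ! k) (T ! Suc k)" using a unfolding ptrav_def
        by (metis (no_types, lifting) Suc_lessD length_append_singleton less_SucI nth_append_left)
    qed
    moreover have "trav_step (last T) q"
    proof -
      have "Suc (length T - 1) < length (T @ [q])" using ne by simp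
      then have "trav_step ((T @ [q]) ! (length T - 1)) ((T @ [q]) ! Suc (length T - 1))"
        using a unfolding ptrav_def by blast
      then show ?thesis using ne lst by (simp add: nth_append)
    qed
    ultimately show "ptrav T \<and> trav_step (last T) q" using a ne unfolding ptrav_def by simp
  next
    assume a: "ptrav T \<and> trav_step (last T) q"
    have "\<forall>k. Suc k < length (T @ [q]) \<longrightarrow> trav_step ((T @ [q]) ! k) ((T @ [q]) ! Suc k)"
    proof (intro allI impI)
      fix k assume k: "Suc k < length (T @ [q])"
      show "trav_step ((T @ [q]) ! k) ((T @ [q]) ! Suc k)"
      proof (cases "Suc k < length T")
        case True then show ?thesis using a unfolding ptrav_def by (simp add: nth_append)
      next
        case False
        then have "Suc k = length T" using k by simp
        then have kk: "k = length T - 1" by simp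
        have "(T @ [q]) ! k = last T" using lst kk ne by (simp add: nth_append)
        moreover have "(T @ [q]) ! Suc k = q" using \<open>Suc k = length T\<close> by (simp add: nth_append)
        ultimately show ?thesis using a by simp
      qed
    qed
    then show "ptrav (T @ [q])" using a ne unfolding ptrav_def by simp
  qed
qed

lemma ptrav_bound: "ptrav T \<Longrightarrow> p \<in> set T \<Longrightarrow> fst p \<le> fst (last T) \<and> snd p \<le> snd (last T)"
proof (induction T arbitrary: p rule: rev_induct)
  case Nil then show ?case by (simp add: ptrav_def)
next
  case (snoc q T)
  show ?case
  proof (cases "T = []")
    case True then show ?thesis using snoc by simp
  next
    case False
    then have a: "ptrav T" "trav_step (last T) q" using snoc ptrav_snoc by auto
    have b: "fst (last T) \<le> fst q" "snd (last T) \<le> snd q" using a(2) unfolding trav_step_def by auto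
    from snoc.prems(2) have "p \<in> set T \<or> p = q" by auto
    then show ?thesis
    proof
      assume "p \<in> set T" then show ?thesis using snoc.IH[OF a(1)] b by fastforce
    qed simp
  qed
qed

lemma ptrav_cover: "ptrav T \<Longrightarrow> j \<le> snd (last T) \<Longrightarrow> \<exists>i. (i, j) \<in> set T"
proof (induction T arbitrary: j rule: rev_induct)
  case Nil then show ?case by (simp add: ptrav_def)
next
  case (snoc q T)
  show ?case
  proof (cases "T = []")
    case True then show ?thesis using snoc by (auto simp: ptrav_single)
  next
    case False
    then have a: "ptrav T" "trav_step (last T) q" using snoc ptrav_snoc by auto
    have b: "snd q \<le> Suc (snd (last T))" using a(2) unfolding trav_step_def by auto
    show ?thesis
    proof (cases "j \<le> snd (last T)")
      case True then show ?thesis using snoc.IH[OF a(1)] by auto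
    next
      case False
      then have "j = snd q" using b snoc.prems(2) by simp
      then have "(fst q, j) \<in> set (T @ [q])" by simp
      then show ?thesis by blast
    qed
  qed
qed

lemma sector_snoc: "sector x (T @ [q]) j = sector x T j \<union> (if snd q = j then {x ! fst q} else {})"
  unfolding sector_def by (cases q) auto

lemma finite_sector: "finite (sector x T j)"
proof -
  have "sector x T j \<subseteq> (\<lambda>p. x ! fst p) ` set T" unfolding sector_def by force
  then show ?thesis by (rule finite_subset) simp
qed

lemma sector_nonempty: "ptrav T \<Longrightarrow> j \<le> snd (last T) \<Longrightarrow> sector x T j \<noteq> {}"
  using ptrav_cover unfolding sector_def by blast

lemma sector_empty: "ptrav T \<Longrightarrow> snd (last T) < j \<Longrightarrow> sector x T j = {}"
  using ptrav_bound unfolding sector_def by fastforce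

lemma sector_cong: "ptrav T \<Longrightarrow> (\<And>i. i \<le> fst (last T) \<Longrightarrow> xs ! i = ys ! i) \<Longrightarrow> sector xs T j = sector ys T j"
proof -
  assume a: "ptrav T" "\<And>i. i \<le> fst (last T) \<Longrightarrow> xs ! i = ys ! i"
  have "xs ! i = ys ! i" if "(i, j) \<in> set T" for i using ptrav_bound[OF a(1) that] a(2) by simp
  then show ?thesis unfolding sector_def by metis
qed

definition prof :: "real list \<Rightarrow> (nat \<times> nat) list \<Rightarrow> nat \<Rightarrow> (real \<times> real) list" where
  "prof xs T m = map (\<lambda>j. (Min (sector xs T j), Max (sector xs T j))) [0..<m]"

lemma prof_cong: "ptrav T \<Longrightarrow> (\<And>i. i \<le> fst (last T) \<Longrightarrow> xs ! i = ys ! i) \<Longrightarrow> prof xs T m = prof ys T m"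
  unfolding prof_def using sector_cong by (metis (no_types, lifting))

lemma prof_Suc: "prof xs T (Suc m) = prof xs T m @ [(Min (sector xs T m), Max (sector xs T m))]"
  unfolding prof_def by simp

lemma prof_h: assumes "ptrav T" "snd (last T) = j"
  shows "prof xs (T @ [(i', j)]) (Suc j) = upd_last (prof xs T (Suc j)) (xs ! i')"
proof -
  have eq: "prof xs (T @ [(i', j)]) j = prof xs T j"
    unfolding prof_def by (auto simp: sector_snoc)
  have ne: "sector xs T j \<noteq> {}" using sector_nonempty assms by simp
  have "Min (sector xs (T @ [(i', j)]) j) = min (Min (sector xs T j)) (xs ! i')"
    using ne finite_sector by (simp add: sector_snoc Min_insert min.commute)
  moreover have "Max (sector xs (T @ [(i', j)]) j) = max (Max (sector xs T j)) (xs ! i')"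
    using ne finite_sector by (simp add: sector_snoc Max_insert max.commute)
  ultimately show ?thesis unfolding prof_Suc eq upd_last_def by simp
qed

lemma prof_new: assumes "ptrav T" "snd (last T) = j"
  shows "prof xs (T @ [(i', Suc j)]) (Suc (Suc j)) = prof xs T (Suc j) @ [(xs ! i', xs ! i')]"
proof -
  have eq: "prof xs (T @ [(i', Suc j)]) (Suc j) = prof xs T (Suc j)"
    unfolding prof_def by (auto simp: sector_snoc)
  have "sector xs (T @ [(i', Suc j)]) (Suc j) = {xs ! i'}"
    using sector_empty[OF assms(1)] assms(2) by (simp add: sector_snoc)
  then show ?thesis by (simp only: prof_Suc[of xs "T @ [(i', Suc j)]" "Suc j"] eq) simp
qed


lemma lemA: "ptrav T \<Longrightarrow> last T = (length xs - 1, j) \<Longrightarrow> xs \<noteq> [] \<Longrightarrow> R xs (prof xs T (Suc j))"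
proof (induction T arbitrary: xs j rule: rev_induct)
  case Nil then show ?case by (simp add: ptrav_def)
next
  case (snoc q T)
  show ?case
  proof (cases "T = []")
    case True
    then have q: "q = (0,0)" using snoc by (simp add: ptrav_single)
    then have "length xs - 1 = 0" "j = 0" using snoc.prems True by auto
    then have "length xs = 1" "j = 0" using snoc.prems(3) by (cases xs; simp)+
    then obtain a where xa: "xs = [a]" by (metis One_nat_def Suc_length_conv length_0_conv)
    have "sector xs [(0,0)] 0 = {a}" unfolding sector_def xa by auto
    then have "prof xs [(0,0)] 1 = [(a,a)]" unfolding prof_def by simp
    then show ?thesis using True q xa \<open>j = 0\<close> by (simp add: R.base)
  next
    case False
    then have a: "ptrav T" "trav_step (last T) q" using snoc ptrav_snoc by auto
    obtain i0 j0 where l0: "last T = (i0, j0)" by fastforce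
    have q: "q = (length xs - 1, j)" using snoc.prems by simp
    have st: "(length xs - 1 = i0 \<or> length xs - 1 = Suc i0) \<and> (j = j0 \<or> j = Suc j0) \<and> (length xs - 1, j) \<noteq> (i0, j0)"
      using a(2) l0 q unfolding trav_step_def by simp
    show ?thesis
    proof (cases "length xs - 1 = i0")
      case True
      then have jj: "j = Suc j0" using st by auto
      have IH: "R xs (prof xs T (Suc j0))" using snoc.IH[OF a(1) _ snoc.prems(3)] l0 True by simp
      have "prof xs (T @ [q]) (Suc j) = prof xs T (Suc j0) @ [(xs ! i0, xs ! i0)]"
        using prof_new[OF a(1), of j0 xs i0] l0 q jj True by simp
      moreover have "xs ! i0 = last xs" using True snoc.prems(3) by (simp add: last_conv_nth)
      ultimately show ?thesis using R.vert[OF IH] by simp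
    next
      case False
      then have ii: "length xs - 1 = Suc i0" using st by auto
      define xs0 where "xs0 = butlast xs"
      define c where "c = last xs"
      have xsd: "xs = xs0 @ [c]" using snoc.prems(3) unfolding xs0_def c_def by simp
      have len0: "length xs0 = Suc i0" using ii unfolding xs0_def by simp
      have ne0: "xs0 \<noteq> []" using len0 by auto
      have IH: "R xs0 (prof xs0 T (Suc j0))" using snoc.IH[OF a(1), of xs0 j0] l0 len0 ne0 by auto
      have pc: "prof xs0 T m = prof xs T m" for m
        by (rule prof_cong[OF a(1)]) (simp add: l0 xsd nth_append len0)
      have xc: "xs ! Suc i0 = c" using xsd len0 by (simp add: nth_append)
      show ?thesis
      proof (cases "j = j0")
        case True
        have "prof xs (T @ [q]) (Suc j) = upd_last (prof xs T (Suc j0)) c"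
          using prof_h[OF a(1), of j0 xs "Suc i0"] l0 q True ii xc by simp
        then show ?thesis using R.horiz[OF IH, of c] pc xsd by simp
      next
        case False
        then have jj: "j = Suc j0" using st by auto
        have "prof xs (T @ [q]) (Suc j) = prof xs T (Suc j0) @ [(c, c)]"
          using prof_new[OF a(1), of j0 xs "Suc i0"] l0 q jj ii xc by simp
        then show ?thesis using R.diag[OF IH, of c] pc xsd by simp
      qed
    qed
  qed
qed

lemma lemB: "R xs ps \<Longrightarrow> \<exists>T. ptrav T \<and> last T = (length xs - 1, length ps - 1) \<and> prof xs T (length ps) = ps"
proof (induction rule: R.induct)
  case (base a)
  have "sector [a] [(0,0)] 0 = {a}" unfolding sector_def by auto
  then have "prof [a] [(0,0)] 1 = [(a,a)]" unfolding prof_def by simp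
  then show ?case by (intro exI[of _ "[(0,0)]"]) (simp add: ptrav_single)
next
  case (vert xs ps)
  then obtain T where T: "ptrav T" "last T = (length xs - 1, length ps - 1)" "prof xs T (length ps) = ps" by blast
  have b: "xs \<noteq> []" "ps \<noteq> []" using R_basic[OF vert.hyps] by auto
  have lp: "length ps > 0" using b by simp
  let ?q = "(length xs - 1, length ps)"
  have tne: "T \<noteq> []" using T(1) by (simp add: ptrav_def)
  have "trav_step (last T) ?q" using T(2) b unfolding trav_step_def by (cases ps; cases xs) auto
  then have p: "ptrav (T @ [?q])" using ptrav_snoc[OF tne] T(1) by simp
  have "prof xs (T @ [?q]) (Suc (Suc (length ps - 1))) = prof xs T (Suc (length ps - 1)) @ [(xs ! (length xs - 1), xs ! (length xs - 1))]"
    using prof_new[OF T(1), of "length ps - 1" xs "length xs - 1"] T(2) b by simp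
  moreover have "xs ! (length xs - 1) = last xs" using b by (simp add: last_conv_nth)
  ultimately have "prof xs (T @ [?q]) (length (ps @ [(last xs, last xs)])) = ps @ [(last xs, last xs)]"
    using b T(3) by simp
  then show ?case using p by (intro exI[of _ "T @ [?q]"]) simp
next
  case (horiz xs ps c)
  then obtain T where T: "ptrav T" "last T = (length xs - 1, length ps - 1)" "prof xs T (length ps) = ps" by blast
  have b: "xs \<noteq> []" "ps \<noteq> []" using R_basic[OF horiz.hyps] by auto
  have lp: "length ps > 0" using b by simp
  let ?q = "(length xs, length ps - 1)"
  have tne: "T \<noteq> []" using T(1) by (simp add: ptrav_def)
  have "trav_step (last T) ?q" using T(2) b unfolding trav_step_def by (cases ps; cases xs) auto
  then have p: "ptrav (T @ [?q])" using ptrav_snoc[OF tne] T(1) by simp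
  have pc: "prof (xs @ [c]) T m = prof xs T m" for m
  proof (rule prof_cong[OF T(1)])
    fix i assume "i \<le> fst (last T)"
    then have "i < length xs" using T(2) b by (cases xs) auto
    then show "(xs @ [c]) ! i = xs ! i" by (simp add: nth_append)
  qed
  have "prof (xs @ [c]) (T @ [?q]) (Suc (length ps - 1)) = upd_last (prof (xs @ [c]) T (Suc (length ps - 1))) ((xs @ [c]) ! length xs)"
    using prof_h[OF T(1), of "length ps - 1" "xs @ [c]" "length xs"] T(2) by simp
  then have "prof (xs @ [c]) (T @ [?q]) (length ps) = upd_last ps c" using pc T(3) b by simp
  then show ?case using p b by (intro exI[of _ "T @ [?q]"]) simp
next
  case (diag xs ps c)
  then obtain T where T: "ptrav T" "last T = (length xs - 1, length ps - 1)" "prof xs T (length ps) = ps" by blast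
  have b: "xs \<noteq> []" "ps \<noteq> []" using R_basic[OF diag.hyps] by auto
  have lp: "length ps > 0" using b by simp
  let ?q = "(length xs, length ps)"
  have tne: "T \<noteq> []" using T(1) by (simp add: ptrav_def)
  have "trav_step (last T) ?q" using T(2) b unfolding trav_step_def by (cases ps; cases xs) auto
  then have p: "ptrav (T @ [?q])" using ptrav_snoc[OF tne] T(1) by simp
  have pc: "prof (xs @ [c]) T m = prof xs T m" for m
  proof (rule prof_cong[OF T(1)])
    fix i assume "i \<le> fst (last T)"
    then have "i < length xs" using T(2) b by (cases xs) auto
    then show "(xs @ [c]) ! i = xs ! i" by (simp add: nth_append)
  qed
  have "prof (xs @ [c]) (T @ [?q]) (Suc (Suc (length ps - 1))) = prof (xs @ [c]) T (Suc (length ps - 1)) @ [((xs @ [c]) ! length xs, (xs @ [c]) ! length xs)]"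
    using prof_new[OF T(1), of "length ps - 1" "xs @ [c]" "length xs"] T(2) b by simp
  then have "prof (xs @ [c]) (T @ [?q]) (length (ps @ [(c,c)])) = ps @ [(c,c)]" using pc T(3) b by simp
  then show ?case using p b by (intro exI[of _ "T @ [?q]"]) simp
qed

lemma traversal_ptrav: "traversal z l T \<longleftrightarrow> ptrav T \<and> last T = (z - 1, l - 1)"
  unfolding traversal_def ptrav_def by auto

lemma profiles_R: "x \<noteq> [] \<Longrightarrow> l \<ge> 1 \<Longrightarrow> profiles x l = {ps. R x ps \<and> length ps = l}"
proof (intro set_eqI iffI)
  fix ps assume a: "x \<noteq> []" "l \<ge> 1" "ps \<in> profiles x l"
  then obtain T where T: "traversal (length x) l T" "ps = profile x l T" unfolding profiles_def by blast
  have "ptrav T" "last T = (length x - 1, l - 1)" using T(1) traversal_ptrav by auto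
  then have "R x (prof x T (Suc (l - 1)))" using lemA a(1) by blast
  moreover have "profile x l T = prof x T l" unfolding profile_def prof_def by simp
  ultimately show "ps \<in> {ps. R x ps \<and> length ps = l}" using T(2) a(2) by (simp add: prof_def)
next
  fix ps assume a: "x \<noteq> []" "l \<ge> 1" "ps \<in> {ps. R x ps \<and> length ps = l}"
  then obtain T where T: "ptrav T" "last T = (length x - 1, l - 1)" "prof x T l = ps" using lemB by blast
  have "profile x l T = prof x T l" unfolding profile_def prof_def by simp
  then show "ps \<in> profiles x l" unfolding profiles_def using T traversal_ptrav by auto
qed


lemma profiles_ptyp: "x \<noteq> [] \<Longrightarrow> l \<ge> 1 \<Longrightarrow> profiles x l = {ps \<in> ptyp l x. length ps = l}"
  using profiles_R unfolding ptyp_def by auto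

lemma compress: "xs \<noteq> [] \<Longrightarrow> \<exists>ys. ys \<noteq> [] \<and> set ys \<subseteq> set xs \<and> ptyp l ys = ptyp l xs \<and>
   inj_on (\<lambda>p. ptyp l (take p ys)) {1..length ys}"
proof (induction "length xs" arbitrary: xs rule: less_induct)
  case less
  show ?case
  proof (cases "inj_on (\<lambda>p. ptyp l (take p xs)) {1..length xs}")
    case True then show ?thesis using less.prems by blast
  next
    case False
    then obtain p q where pq: "p \<in> {1..length xs}" "q \<in> {1..length xs}" "p \<noteq> q"
      "ptyp l (take p xs) = ptyp l (take q xs)" unfolding inj_on_def by blast
    obtain p' q' where pq': "1 \<le> p'" "p' < q'" "q' \<le> length xs" "ptyp l (take p' xs) = ptyp l (take q' xs)"
    proof (cases "p < q")
      case True then show ?thesis using pq that[of p q] by auto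
    next
      case False then have "q < p" using pq(3) by simp
      then show ?thesis using pq that[of q p] by auto
    qed
    define xs2 where "xs2 = take p' xs @ drop q' xs"
    have len: "length xs2 < length xs" unfolding xs2_def using pq' by simp
    have ne1: "take p' xs \<noteq> []" "take q' xs \<noteq> []" using pq' less.prems by auto
    have ne2: "xs2 \<noteq> []" unfolding xs2_def using ne1 by simp
    have "ptyp l xs2 = ptyp l (take q' xs @ drop q' xs)" unfolding xs2_def
      by (rule ptyp_cong[OF ne1 pq'(4)])
    then have t: "ptyp l xs2 = ptyp l xs" by simp
    have s: "set xs2 \<subseteq> set xs" unfolding xs2_def using set_take_subset set_drop_subset by fastforce
    obtain ys where "ys \<noteq> []" "set ys \<subseteq> set xs2" "ptyp l ys = ptyp l xs2" "inj_on (\<lambda>p. ptyp l (take p ys)) {1..length ys}"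
      using less.hyps[OF len ne2] by blast
    then show ?thesis using t s by blast
  qed
qed

lemma sum_bound: "(n::nat) \<ge> 2 \<Longrightarrow> (\<Sum>i\<le>l. (n * n) ^ i) \<le> n ^ (2 * l + 2)"
proof (induction l)
  case 0 then show ?case by (simp add: power2_eq_square)
next
  case (Suc l)
  have e: "(n * n) ^ Suc l = n ^ (2 * l + 2)"
  proof -
    have "n ^ (2 * l + 2) = n ^ (2 * Suc l)" by simp
    also have "\<dots> = (n ^ 2) ^ Suc l" by (rule power_mult)
    finally show ?thesis by (simp only: power2_eq_square)
  qed
  have "n ^ (2 * Suc l + 2) = (n * n) * n ^ (2 * l + 2)" by (simp add: power_add[symmetric] power_Suc)
  moreover have "2 * n ^ (2 * l + 2) \<le> (n * n) * n ^ (2 * l + 2)"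
  proof (rule mult_right_mono)
    show "2 \<le> n * n" using Suc.prems by (metis mult_le_mono one_le_numeral order_trans mult_1)
  qed simp
  ultimately have m: "2 * n ^ (2 * l + 2) \<le> n ^ (2 * Suc l + 2)" by simp
  have "(\<Sum>i\<le>Suc l. (n * n) ^ i) = (\<Sum>i\<le>l. (n * n) ^ i) + n ^ (2 * l + 2)"
    using e by (simp only: sum.atMost_Suc)
  also have "\<dots> \<le> 2 * n ^ (2 * l + 2)" using Suc.IH Suc.prems by simp
  finally show ?case using m by linarith
qed

theorem lemma9p11:
  shows "\<exists>C::real. \<forall>(x::real list) (l::nat). length x \<ge> 1 \<longrightarrow> l \<ge> 1 \<longrightarrow>
           (\<exists>x'::real list. set x' \<subseteq> set x \<and>
              real (length x') \<le> C * 2 ^ (card (set x) ^ (2 * l + 2)) \<and>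
              profiles x l = profiles x' l)"
proof (intro exI[of _ 1] allI impI)
  fix x :: "real list" and l :: nat
  assume lx: "length x \<ge> 1" and l1: "l \<ge> 1"
  then have xne: "x \<noteq> []" by auto
  obtain ys where ys: "ys \<noteq> []" "set ys \<subseteq> set x" "ptyp l ys = ptyp l x"
    and inj: "inj_on (\<lambda>p. ptyp l (take p ys)) {1..length ys}"
    using compress[OF xne] by blast
  have prof: "profiles x l = profiles ys l" using profiles_ptyp[OF xne l1] profiles_ptyp[OF ys(1) l1] ys(3) by simp
  define n where "n = card (set x)"
  have n1: "n \<ge> 1" unfolding n_def using xne by (simp add: Suc_le_eq card_gt_0_iff)
  define U where "U = {ps. set ps \<subseteq> set x \<times> set x \<and> length ps \<le> l}"
  have fU: "finite U" unfolding U_def by (rule finite_lists_length_le) simp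
  have cU: "card U = (\<Sum>i\<le>l. (n * n) ^ i)" unfolding U_def n_def
    by (simp add: card_lists_length_le card_cartesian_product)
  have img: "(\<lambda>p. ptyp l (take p ys)) ` {1..length ys} \<subseteq> Pow U"
  proof
    fix A assume "A \<in> (\<lambda>p. ptyp l (take p ys)) ` {1..length ys}"
    then obtain p where A: "A = ptyp l (take p ys)" by blast
    have "set (take p ys) \<subseteq> set x" using ys(2) set_take_subset by fastforce
    then show "A \<in> Pow U" unfolding A ptyp_def U_def using R_basic by fastforce
  qed
  have "length ys \<le> card (Pow U)"
    using card_inj_on_le[OF inj img] fU by simp
  then have lb: "length ys \<le> 2 ^ card U" using fU by (simp add: card_Pow)
  have "length ys \<le> 2 ^ (n ^ (2 * l + 2))"
  proof (cases "n \<ge> 2")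
    case True
    have "card U \<le> n ^ (2 * l + 2)" using cU sum_bound[OF True] by simp
    then have "(2::nat) ^ card U \<le> 2 ^ (n ^ (2 * l + 2))" by (rule power_increasing) simp
    then show ?thesis using lb order_trans by blast
  next
    case False
    then have n1': "n = 1" using n1 by simp
    then obtain a where sa: "set x = {a}" unfolding n_def using card_1_singletonE by blast
    have "length ys \<le> 1"
    proof (rule ccontr)
      assume "\<not> length ys \<le> 1"
      then obtain y0 y1 r where yd: "ys = y0 # y1 # r" by (cases ys; cases "tl ys") auto
      have "y0 = a" "y1 = a" using ys(2) sa yd by auto
      then have t1: "take 1 ys = [a]" and t2: "take 2 ys = [a] @ [last [a]]" using yd by auto
      have "ptyp l ([a] @ [last [a]]) = ptyp l [a]" unfolding ptyp_def using R_dup[of "[a]"] by simp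
      then have "ptyp l (take 1 ys) = ptyp l (take 2 ys)" using t1 t2 by simp
      moreover have "(1::nat) \<in> {1..length ys}" "(2::nat) \<in> {1..length ys}" using yd by auto
      ultimately show False using inj unfolding inj_on_def by fastforce
    qed
    then show ?thesis using n1' by simp
  qed
  then have "real (length ys) \<le> 2 ^ (n ^ (2 * l + 2))"
    by (metis of_nat_le_iff of_nat_numeral of_nat_power)
  then show "\<exists>x'. set x' \<subseteq> set x \<and> real (length x') \<le> 1 * 2 ^ (card (set x) ^ (2 * l + 2)) \<and>
              profiles x l = profiles x' l"
    using ys(2) prof unfolding n_def by auto
qed


end
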